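(* Tight GFG-NRWs are Büchi-type: every tight GFG-NRW $\mathcal{A}=\langle\Sigma,Q,Q_0,\delta,\alpha\rangle$ whose language is recognized by some GFG-NBW has an equivalent GFG-NBW on the same structure, i.e. there is a set $\alpha'\subseteq Q$ such that $\langle\Sigma,Q,Q_0,\delta,\alpha'\rangle$, viewed as a Büchi automaton, is GFG and recognizes $L(\mathcal{A})$.
   Context: An automaton $\langle\Sigma,Q,Q_0,\delta,\alpha\rangle$ has $\delta:Q\times\Sigma\to2^Q$; runs are $r_0r_1\cdots$ with $r_0\in Q_0$, $r_{i+1}\in\delta(r_i,a_{i+1})$, accepting if the set of infinitely visited states satisfies $\alpha$. Büchi ($\alpha\subseteq Q$): $S$ accepting iff $S\cap\alpha\ne\emptyset$. Rabin ($\alpha$ a set of pairs $\langle E,F\rangle$, $E$ bad, $F$ good): $S$ accepting iff some pair has $S\cap E=\emptyset$ and $S\cap F\neq\emptyset$. NRW/NBW: nondeterministic Rabin/Büchi word automaton. $\mathcal{A}$ is GFG if there is a strategy $g:\Sigma^*\to Q$ such that for every $w=a_1a_2\cdots$, $g(\epsilon),g(a_1),g(a_1a_2),\ldots$ is a run on $w$, accepting whenever $w\in L(\mathcal{A})$. Finite-state strategies are transducers $g=\langle\Sigma,Q,M,m_0,\rho,\tau\rangle$ (finite memories $M$, $\rho:M\times\Sigma\to M$ extended to words from $m_0$, $\tau:M\to Q$, $g(u)=\tau(\rho(u))$); $m$ is a memory of $q$ if $\tau(m)=q$. $\mathcal{A}_g=\langle\Sigma,M,m_0,\rho,\alpha_g\rangle$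 where $\alpha_g$ replaces each set $F$ in $\alpha$ by $\{m\mid\tau(m)\in F\}$. A transition $\langle q,a,q'\rangle$ is used by $g$ if $q=g(u)$, $q'=g(ua)$ for some $u$. For a set $P$ of finite paths, a combination is the union of state sets of a nonempty subset of $P$. For memories $m\neq m'$ with $\tau(m)=\tau(m')$, $m$ is replaceable by $m'$ if the set of paths of $\mathcal{A}_g$ from $m'$ to $m$ is empty or all its combinations are accepting w.r.t. $\alpha_g$. $\mathcal{A}$ is tight if for some finite-state strategy $g$ witnessing its GFGness, every transition of $\mathcal{A}$ is used by $g$ and no memory is replaceable by a different memory of the same state. *)

theory Defs
  imports Main
begin

text \<open>Infinite words are functions nat to letters,
  the letter w i being the (i+1)-th letter a_(i+1).\<close>

definition words :: "'a set \<Rightarrow> (nat \<Rightarrow> 'a) set" where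
  "words Sig = {w. \<forall>i. w i \<in> Sig}"

definition is_run :: "'q set \<Rightarrow> ('q \<Rightarrow> 'a \<Rightarrow> 'q set) \<Rightarrow> (nat \<Rightarrow> 'a) \<Rightarrow> (nat \<Rightarrow> 'q) \<Rightarrow> bool" where
  "is_run Q0 delta w r \<longleftrightarrow> r 0 \<in> Q0 \<and> (\<forall>i. r (Suc i) \<in> delta (r i) (w i))"

definition inf_states :: "(nat \<Rightarrow> 'q) \<Rightarrow> 'q set" where
  "inf_states r = {q. \<exists>\<^sub>\<infinity> i. r i = q}"

definition buchi_acc :: "'q set \<Rightarrow> 'q set \<Rightarrow> bool" where
  "buchi_acc alpha S \<longleftrightarrow> S \<inter> alpha \<noteq> {}"

definition rabin_acc :: "('q set \<times> 'q set) set \<Rightarrow> 'q set \<Rightarrow> bool" where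
  "rabin_acc alpha S \<longleftrightarrow> (\<exists>(E, F) \<in> alpha. S \<inter> E = {} \<and> S \<inter> F \<noteq> {})"

definition lang :: "'a set \<Rightarrow> 'q set \<Rightarrow> ('q \<Rightarrow> 'a \<Rightarrow> 'q set) \<Rightarrow> ('q set \<Rightarrow> bool) \<Rightarrow> (nat \<Rightarrow> 'a) set" where
  "lang Sig Q0 delta acc = {w \<in> words Sig. \<exists>r. is_run Q0 delta w r \<and> acc (inf_states r)}"

definition aut_wf :: "'a set \<Rightarrow> 'q set \<Rightarrow> 'q set \<Rightarrow> ('q \<Rightarrow> 'a \<Rightarrow> 'q set) \<Rightarrow> bool" where
  "aut_wf Sig Q Q0 delta \<longleftrightarrow> finite Sig \<and> finite Q \<and> Q0 \<subseteq> Q \<and>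
     (\<forall>q \<in> Q. \<forall>a \<in> Sig. delta q a \<subseteq> Q)"

definition nbw_wf :: "'a set \<Rightarrow> 'q set \<Rightarrow> 'q set \<Rightarrow> ('q \<Rightarrow> 'a \<Rightarrow> 'q set) \<Rightarrow> 'q set \<Rightarrow> bool" where
  "nbw_wf Sig Q Q0 delta alpha \<longleftrightarrow> aut_wf Sig Q Q0 delta \<and> alpha \<subseteq> Q"

definition nrw_wf :: "'a set \<Rightarrow> 'q set \<Rightarrow> 'q set \<Rightarrow> ('q \<Rightarrow> 'a \<Rightarrow> 'q set) \<Rightarrow> ('q set \<times> 'q set) set \<Rightarrow> bool" where
  "nrw_wf Sig Q Q0 delta alpha \<longleftrightarrow> aut_wf Sig Q Q0 delta \<and> finite alpha \<and>
     (\<forall>(E, F) \<in> alpha. E \<subseteq> Q \<and> F \<subseteq> Q)"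

definition pref :: "(nat \<Rightarrow> 'a) \<Rightarrow> nat \<Rightarrow> 'a list" where
  "pref w i = map w [0..<i]"

definition gfg_strategy :: "'a set \<Rightarrow> 'q set \<Rightarrow> ('q \<Rightarrow> 'a \<Rightarrow> 'q set) \<Rightarrow> ('q set \<Rightarrow> bool) \<Rightarrow> ('a list \<Rightarrow> 'q) \<Rightarrow> bool" where
  "gfg_strategy Sig Q0 delta acc g \<longleftrightarrow>
     (\<forall>w \<in> words Sig. is_run Q0 delta w (\<lambda>i. g (pref w i)) \<and>
        (w \<in> lang Sig Q0 delta acc \<longrightarrow> acc (inf_states (\<lambda>i. g (pref w i)))))"

definition gfg :: "'a set \<Rightarrow> 'q set \<Rightarrow> ('q \<Rightarrow> 'a \<Rightarrow> 'q set) \<Rightarrow> ('q set \<Rightarrow> bool) \<Rightarrow> bool" where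
  "gfg Sig Q0 delta acc \<longleftrightarrow> (\<exists>g. gfg_strategy Sig Q0 delta acc g)"

definition transducer :: "'a set \<Rightarrow> 'q set \<Rightarrow> 'm set \<Rightarrow> 'm \<Rightarrow> ('m \<Rightarrow> 'a \<Rightarrow> 'm) \<Rightarrow> ('m \<Rightarrow> 'q) \<Rightarrow> bool" where
  "transducer Sig Q M m0 rho tau \<longleftrightarrow> finite M \<and> m0 \<in> M \<and>
     (\<forall>m \<in> M. \<forall>a \<in> Sig. rho m a \<in> M) \<and> (\<forall>m \<in> M. tau m \<in> Q)"

definition strat_of :: "'m \<Rightarrow> ('m \<Rightarrow> 'a \<Rightarrow> 'm) \<Rightarrow> ('m \<Rightarrow> 'q) \<Rightarrow> 'a list \<Rightarrow> 'q" where
  "strat_of m0 rho tau u = tau (foldl rho m0 u)"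

definition mpaths :: "'a set \<Rightarrow> 'm set \<Rightarrow> ('m \<Rightarrow> 'a \<Rightarrow> 'm) \<Rightarrow> 'm \<Rightarrow> 'm \<Rightarrow> 'm list set" where
  "mpaths Sig M rho m1 m2 = {ps. ps \<noteq> [] \<and> hd ps = m1 \<and> last ps = m2 \<and> set ps \<subseteq> M \<and>
     (\<forall>i. Suc i < length ps \<longrightarrow> (\<exists>a \<in> Sig. ps ! Suc i = rho (ps ! i) a))}"

definition combinations :: "'m list set \<Rightarrow> 'm set set" where
  "combinations P = {\<Union> (set ` P') | P'. P' \<subseteq> P \<and> P' \<noteq> {}}"

definition alpha_g :: "('q set \<times> 'q set) set \<Rightarrow> 'm set \<Rightarrow> ('m \<Rightarrow> 'q) \<Rightarrow> ('m set \<times> 'm set) set" where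
  "alpha_g alpha M tau = (\<lambda>(E, F). ({m \<in> M. tau m \<in> E}, {m \<in> M. tau m \<in> F})) ` alpha"

definition replaceable :: "'a set \<Rightarrow> ('q set \<times> 'q set) set \<Rightarrow> 'm set \<Rightarrow> ('m \<Rightarrow> 'a \<Rightarrow> 'm) \<Rightarrow> ('m \<Rightarrow> 'q) \<Rightarrow> 'm \<Rightarrow> 'm \<Rightarrow> bool" where
  "replaceable Sig alpha M rho tau m m' \<longleftrightarrow> m \<noteq> m' \<and> tau m = tau m' \<and>
     (mpaths Sig M rho m' m = {} \<or>
      (\<forall>S \<in> combinations (mpaths Sig M rho m' m). rabin_acc (alpha_g alpha M tau) S))"

definition tight :: "'a set \<Rightarrow> 'q set \<Rightarrow> 'q set \<Rightarrow> ('q \<Rightarrow> 'a \<Rightarrow> 'q set) \<Rightarrow> ('q set \<times> 'q set) set \<Rightarrow> bool" where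
  "tight Sig Q Q0 delta alpha \<longleftrightarrow>
    (\<exists>(M :: nat set) m0 rho tau.
       transducer Sig Q M m0 rho tau \<and>
       gfg_strategy Sig Q0 delta (rabin_acc alpha) (strat_of m0 rho tau) \<and>
       (\<forall>q \<in> Q. \<forall>a \<in> Sig. \<forall>q' \<in> delta q a. \<exists>u \<in> lists Sig.
          strat_of m0 rho tau u = q \<and> strat_of m0 rho tau (u @ [a]) = q') \<and>
       (\<forall>m \<in> M. \<forall>m' \<in> M. \<not> replaceable Sig alpha M rho tau m m'))"

end

theory Submission
  imports Defs "HOL-Library.Infinite_Set"
begin

definition visits :: "('m \<Rightarrow> 'a \<Rightarrow> 'm) \<Rightarrow> 'm \<Rightarrow> 'a list \<Rightarrow> 'm set" where
  "visits rho m z = (\<lambda>j. foldl rho m (take j z)) ` {0..length z}"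

definition walkv :: "'a set \<Rightarrow> ('m \<Rightarrow> 'a \<Rightarrow> 'm) \<Rightarrow> 'm \<Rightarrow> 'm \<Rightarrow> 'm set \<Rightarrow> bool" where
  "walkv Sig rho a b V \<longleftrightarrow> (\<exists>z\<in>lists Sig. foldl rho a z = b \<and> visits rho a z = V)"

lemma visits_Nil[simp]: "visits rho m [] = {m}"
  by (simp add: visits_def)

lemma visits_Cons[simp]: "visits rho m (x # z) = insert m (visits rho (rho m x) z)"
proof -
  have "{0..length (x#z)} = insert 0 (Suc ` {0..length z})"
    by (auto simp: image_iff)
  then have "visits rho m (x#z) = (\<lambda>j. foldl rho m (take j (x#z))) ` insert 0 (Suc ` {0..length z})"
    unfolding visits_def by simp_all
  also have "... = insert m ((\<lambda>j. foldl rho (rho m x) (take j z)) ` {0..length z})"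
    by (simp only: image_insert image_image take_Suc_Cons foldl_Cons take_0 foldl_Nil)
  finally show ?thesis unfolding visits_def .
qed

lemma start_in_visits[simp]: "m \<in> visits rho m z"
  unfolding visits_def by (rule image_eqI[of _ _ 0]) auto

lemma visits_append: "visits rho m (a @ b) = visits rho m a \<union> visits rho (foldl rho m a) b"
  by (induction a arbitrary: m) auto

lemma walkv_refl: "walkv Sig rho a a {a}"
  unfolding walkv_def by (rule bexI[of _ "[]"]) auto

lemma walkv_step: "x \<in> Sig \<Longrightarrow> walkv Sig rho a (rho a x) {a, rho a x}"
  unfolding walkv_def by (rule bexI[of _ "[x]"]) auto

lemma walkv_trans: "walkv Sig rho a b V \<Longrightarrow> walkv Sig rho b c V' \<Longrightarrow> walkv Sig rho a c (V \<union> V')"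
  unfolding walkv_def by (metis append_in_lists_conv foldl_append visits_append)

lemma walkv_start: "walkv Sig rho a b V \<Longrightarrow> a \<in> V"
  unfolding walkv_def by auto

lemma foldl_in: "m \<in> M \<Longrightarrow> z \<in> lists Sig \<Longrightarrow> \<forall>m\<in>M. \<forall>a\<in>Sig. rho m a \<in> M \<Longrightarrow> foldl rho m z \<in> M"
  by (induction z arbitrary: m) auto

lemma visits_in: "m \<in> M \<Longrightarrow> z \<in> lists Sig \<Longrightarrow> \<forall>m\<in>M. \<forall>a\<in>Sig. rho m a \<in> M \<Longrightarrow> visits rho m z \<subseteq> M"
  by (induction z arbitrary: m) auto

lemma chain_walk:
  assumes "\<forall>k<n. walkv Sig rho (P k) (P (Suc k)) (Op k)"
  shows "walkv Sig rho (P 0) (P n) ({P 0} \<union> (\<Union>k<n. Op k))"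
  using assms
proof (induction n)
  case 0 then show ?case by (simp add: walkv_refl)
next
  case (Suc n)
  have "walkv Sig rho (P 0) (P n) ({P 0} \<union> (\<Union>k<n. Op k))" using Suc by auto
  moreover have "walkv Sig rho (P n) (P (Suc n)) (Op n)" using Suc.prems by auto
  ultimately have "walkv Sig rho (P 0) (P (Suc n)) (({P 0} \<union> (\<Union>k<n. Op k)) \<union> Op n)"
    by (rule walkv_trans)
  then show ?case by (simp add: lessThan_Suc Un_ac)
qed

lemma rounds_walk:
  assumes "\<forall>l::nat. walkv Sig rho i i (V l)"
  shows "walkv Sig rho i i ({i} \<union> (\<Union>l<(K::nat). V l))"
proof (induction K)
  case 0 then show ?case by (simp add: walkv_refl)
next
  case (Suc K)
  have "walkv Sig rho i i (({i} \<union> (\<Union>l<K. V l)) \<union> V K)"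
    by (rule walkv_trans[OF Suc.IH assms[rule_format]])
  then show ?case by (simp add: lessThan_Suc Un_ac)
qed

lemma path_walk:
  "ps \<noteq> [] \<Longrightarrow> hd ps = a \<Longrightarrow> last ps = b \<Longrightarrow>
   \<forall>i. Suc i < length ps \<longrightarrow> (\<exists>x\<in>Sig. ps ! Suc i = rho (ps ! i) x) \<Longrightarrow>
   walkv Sig rho a b (set ps)"
proof (induction ps arbitrary: a)
  case Nil then show ?case by simp
next
  case (Cons p ps)
  show ?case
  proof (cases ps)
    case Nil
    with Cons show ?thesis by (simp add: walkv_refl)
  next
    case (Cons p' ps')
    from Cons.prems(4)[rule_format, of 0] \<open>ps = p' # ps'\<close> obtain x where x: "x \<in> Sig" "p' = rho p x"
      by auto
    have st: "\<forall>i. Suc i < length ps \<longrightarrow> (\<exists>x\<in>Sig. ps ! Suc i = rho (ps ! i) x)"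
    proof (intro allI impI)
      fix i assume "Suc i < length ps"
      then show "\<exists>x\<in>Sig. ps ! Suc i = rho (ps ! i) x"
        using Cons.prems(4)[rule_format, of "Suc i"] by simp
    qed
    have ih: "walkv Sig rho p' b (set ps)"
      using Cons.IH[of p', OF _ _ _ st] Cons.prems \<open>ps = p' # ps'\<close> by auto
    have "walkv Sig rho a b ({a, rho a x} \<union> set ps)"
      using Cons.prems x ih by (intro walkv_trans[OF walkv_step]) auto
    then show ?thesis using Cons.prems \<open>ps = p' # ps'\<close> x by (simp add: insert_commute)
  qed
qed

lemma rabin_g:
  "S \<subseteq> M \<Longrightarrow> rabin_acc (alpha_g alpha M tau) S \<longleftrightarrow> rabin_acc alpha (tau ` S)"
  unfolding rabin_acc_def alpha_g_def by (auto 0 4)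

lemma rabin_union:
  "\<not> rabin_acc alpha (\<Union>a\<in>A. X a)" if "\<forall>a\<in>A. \<not> rabin_acc alpha (X a)"
  using that unfolding rabin_acc_def by blast

lemma length_pref[simp]: "length (pref w i) = i"
  by (simp add: pref_def)

lemma pref_add: "pref w (i + k) = pref w i @ map w [i..<i+k]"
  unfolding pref_def using upt_add_eq_append[of 0 i k] by simp

lemma pref_take: "j \<le> i \<Longrightarrow> pref w j = take j (pref w i)"
  unfolding pref_def by (simp add: take_map)

lemma pref_lists: "w \<in> words Sig \<Longrightarrow> pref w i \<in> lists Sig"
  unfolding pref_def words_def by auto

lemma seg_visits:
  "visits rho (foldl rho m0 (pref w j1)) (map w [j1..<j1+d]) =
     (\<lambda>i. foldl rho m0 (pref w i)) ` {j1..j1+d}"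
proof -
  have st: "foldl rho (foldl rho m0 (pref w j1)) (take j (map w [j1..<j1+d])) = foldl rho m0 (pref w (j1 + j))"
    if "j \<in> {0..d}" for j
  proof -
    have "take j (map w [j1..<j1+d]) = map w [j1..<j1+j]"
      using that by (simp add: take_map)
    then show ?thesis by (simp add: pref_add)
  qed
  have "visits rho (foldl rho m0 (pref w j1)) (map w [j1..<j1+d]) =
     (\<lambda>j. foldl rho m0 (pref w (j1 + j))) ` {0..d}"
    unfolding visits_def length_map length_upt
    using st by (intro image_cong) simp_all
  also have "... = (\<lambda>i. foldl rho m0 (pref w i)) ` ((\<lambda>j. j + j1) ` {0..d})"
    by (simp only: image_image add.commute)
  also have "(\<lambda>j. j + j1) ` {0..d} = {j1..j1+d}"
    by (simp only: image_add_atLeastAtMost' add_0 add.commute)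
  finally show ?thesis .
qed

lemma ev_inf:
  assumes "finite (range s)"
  shows "\<exists>N. \<forall>i\<ge>N. s i \<in> inf_states s"
proof -
  have "{i. s i \<notin> inf_states s} = (\<Union>v\<in>range s - inf_states s. {i. s i = v})"
    by auto
  moreover have "finite {i. s i = v}" if "v \<notin> inf_states s" for v
    using that unfolding inf_states_def by (simp add: Inf_many_def)
  ultimately have "finite {i. s i \<notin> inf_states s}"
    using assms by auto
  then obtain N where "\<forall>i\<in>{i. s i \<notin> inf_states s}. i < N"
    using finite_nat_set_iff_bounded by blast
  then show ?thesis by (metis leD mem_Collect_eq)
qed

lemma inf_image:
  assumes "finite (range s)"
  shows "inf_states (\<lambda>i. f (s i)) = f ` inf_states s"
proof
  obtain N where N: "\<forall>i\<ge>N. s i \<in> inf_states s" using ev_inf[OF assms] by blast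
  show "inf_states (\<lambda>i. f (s i)) \<subseteq> f ` inf_states s"
  proof
    fix y assume "y \<in> inf_states (\<lambda>i. f (s i))"
    then have "\<exists>\<^sub>\<infinity>i. f (s i) = y" by (simp add: inf_states_def)
    then obtain i where "i \<ge> N" "f (s i) = y" by (auto simp: INFM_nat_le)
    then show "y \<in> f ` inf_states s" using N by blast
  qed
  show "f ` inf_states s \<subseteq> inf_states (\<lambda>i. f (s i))"
  proof
    fix y assume "y \<in> f ` inf_states s"
    then obtain v where "v \<in> inf_states s" "y = f v" by blast
    then have "\<exists>\<^sub>\<infinity>i. s i = v" by (simp add: inf_states_def)
    then have "\<exists>\<^sub>\<infinity>i. f (s i) = y" using \<open>y = f v\<close> by (auto elim: INFM_mono)
    then show "y \<in> inf_states (\<lambda>i. f (s i))" by (simp add: inf_states_def)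
  qed
qed

lemma segment:
  assumes "finite (range s)" "m \<in> inf_states s"
  shows "\<exists>j1 j2. j1 < j2 \<and> s j1 = m \<and> s j2 = m \<and> s ` {j1..j2} = inf_states s"
proof -
  let ?I = "inf_states s"
  obtain N where N: "\<forall>i\<ge>N. s i \<in> ?I" using ev_inf[OF assms(1)] by blast
  have fin: "finite ?I" using assms(1) unfolding inf_states_def
    by (rule finite_subset[rotated]) (auto dest: INFM_EX)
  have inf: "\<exists>\<^sub>\<infinity>i. s i = v" if "v \<in> ?I" for v using that by (simp add: inf_states_def)
  obtain j1 where j1: "j1 \<ge> N" "s j1 = m" using inf[OF assms(2)] by (auto simp: INFM_nat_le)
  have "\<forall>v\<in>?I. \<exists>t. t > j1 \<and> s t = v" using inf by (auto simp: INFM_nat)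
  then obtain tf where tf: "\<forall>v\<in>?I. tf v > j1 \<and> s (tf v) = v" by metis
  define T where "T = Max (tf ` ?I)"
  obtain j2 where j2: "j2 > T + j1" "s j2 = m" using inf[OF assms(2)] by (auto simp: INFM_nat)
  have "s ` {j1..j2} = ?I"
  proof
    show "s ` {j1..j2} \<subseteq> ?I" using N j1 by auto
    show "?I \<subseteq> s ` {j1..j2}"
    proof
      fix v assume v: "v \<in> ?I"
      have "tf v \<le> T" unfolding T_def using fin v by auto
      then have "tf v \<in> {j1..j2}" using tf v j2 by auto
      then show "v \<in> s ` {j1..j2}" using tf v by (metis imageI)
    qed
  qed
  moreover have "j1 < j2" using j2 by simp
  ultimately show ?thesis using j1 j2 by blast
qed

lemma block_inf:
  assumes b: "strict_mono (b::nat\<Rightarrow>nat)" and V: "\<forall>n. f ` {b n..b (Suc n)} = V"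
  shows "inf_states f = V"
proof
  show "inf_states f \<subseteq> V"
  proof
    fix q assume "q \<in> inf_states f"
    then have "\<exists>\<^sub>\<infinity>i. f i = q" by (simp add: inf_states_def)
    then obtain i where i: "i > b 0" "f i = q" by (auto simp: INFM_nat)
    have "i < b (Suc i)" using strict_mono_imp_increasing[OF b, of "Suc i"] by simp
    then obtain k where k: "\<forall>j\<le>k. \<not> i < b j" "i < b (k + 1)"
      using ex_least_nat_less[of "\<lambda>k. i < b k"] i by auto
    then have "i \<in> {b k..b (Suc k)}" by auto
    then show "q \<in> V" using V i by blast
  qed
  show "V \<subseteq> inf_states f"
  proof
    fix q assume q: "q \<in> V"
    have "\<exists>n>m. f n = q" for m
    proof -
      have "q \<in> f ` {b (Suc m)..b (Suc (Suc m))}" using V q by simp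
      then obtain i where "i \<in> {b (Suc m)..b (Suc (Suc m))}" "f i = q" by blast
      moreover have "Suc m \<le> b (Suc m)" using strict_mono_imp_increasing[OF b] by blast
      ultimately show ?thesis by (intro exI[of _ i]) auto
    qed
    then show "q \<in> inf_states f" by (simp add: inf_states_def INFM_nat)
  qed
qed

lemma len_ge: assumes len: "\<forall>n. length (P n) < length (P (Suc n))" shows "n \<le> length (P n)"
proof (induction n)
  case 0 show ?case by simp
next
  case (Suc n) show ?case using Suc.IH len[rule_format, of n] by simp
qed

definition limw :: "(nat \<Rightarrow> 'a list) \<Rightarrow> nat \<Rightarrow> 'a" where
  "limw P i = P (Suc i) ! i"

lemma limw_pref:
  assumes ext: "\<forall>n. \<exists>s. P (Suc n) = P n @ s" and len: "\<forall>n. length (P n) < length (P (Suc n))"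
  shows "pref (limw P) (length (P n)) = P n"
proof -
  have pre: "\<forall>i < length (P n). P (n + d) ! i = P n ! i" for n d
  proof (induction d)
    case 0 then show ?case by simp
  next
    case (Suc d)
    obtain s' where s': "P (Suc (n + d)) = P (n + d) @ s'" using ext by blast
    have "length (P n) \<le> length (P (n + d))"
    proof (induction d)
      case 0 then show ?case by simp
    next
      case (Suc d) then show ?case using len[rule_format, of "n + d"] by simp
    qed
    then show ?case using Suc.IH s' by (auto simp: nth_append)
  qed
  have lenge: "n \<le> length (P n)" for n
    using len_ge[OF len] .
  have eq: "limw P i = P n ! i" if i: "i < length (P n)" for i
  proof -
    have i2: "i < length (P (Suc i))" using lenge[of "Suc i"] by simp
    have "P (Suc i + (n + Suc i)) ! i = P (Suc i) ! i" using pre[of "Suc i" "n + Suc i"] i2 by blast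
    moreover have "P (n + (Suc i + Suc i)) ! i = P n ! i" using pre[of n "Suc i + Suc i"] i by blast
    moreover have "Suc i + (n + Suc i) = n + (Suc i + Suc i)" by simp
    ultimately show ?thesis unfolding limw_def by metis
  qed
  show ?thesis
  proof (rule nth_equalityI)
    show "length (pref (limw P) (length (P n))) = length (P n)" by simp
    fix i assume "i < length (pref (limw P) (length (P n)))"
    then have i: "i < length (P n)" by simp
    have "pref (limw P) (length (P n)) ! i = limw P i"
      unfolding pref_def using i by simp
    then show "pref (limw P) (length (P n)) ! i = P n ! i" using eq[OF i] by simp
  qed
qed

lemma limw_words:
  assumes "\<forall>n. P n \<in> lists Sig" and len: "\<forall>n. length (P n) < length (P (Suc n))"
  shows "limw P \<in> words Sig"
proof -
  have lenge: "n \<le> length (P n)" for n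
    using len_ge[OF len] .
  have "limw P i \<in> Sig" for i
  proof -
    have "i < length (P (Suc i))" using lenge[of "Suc i"] by simp
    then have "P (Suc i) ! i \<in> set (P (Suc i))" by (rule nth_mem)
    then show ?thesis using assms(1) unfolding limw_def by (auto simp: in_lists_conv_set)
  qed
  then show ?thesis by (simp add: words_def)
qed

lemma strat_of_eq: "strat_of m0 rho tau u = tau (foldl rho m0 u)"
  by (simp add: strat_of_def)

lemma blk:
  assumes P: "\<forall>n. P (Suc n) = P n @ S n" and ne: "\<forall>n. S n \<noteq> []"
    and f: "\<forall>n. foldl rho m0 (P n) = m" and V: "\<forall>n. visits rho m (S n) = V"
  shows "inf_states (\<lambda>i. tau (foldl rho m0 (pref (limw P) i))) = tau ` V"
proof -
  define b where "b n = length (P n)" for n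
  have len: "\<forall>n. length (P n) < length (P (Suc n))" using P ne by simp
  have ext: "\<forall>n. \<exists>s. P (Suc n) = P n @ s" using P by blast
  have sm: "strict_mono b" unfolding b_def using len by (simp add: strict_mono_Suc_iff)
  have pb: "pref (limw P) (b n) = P n" for n unfolding b_def by (rule limw_pref[OF ext len])
  have img: "(\<lambda>i. tau (foldl rho m0 (pref (limw P) i))) ` {b n..b (Suc n)} = tau ` V" for n
  proof -
    have bs: "b (Suc n) = b n + length (S n)" unfolding b_def using P by simp
    have "P n @ S n = P n @ map (limw P) [b n..<b n + length (S n)]"
      using pb[of "Suc n"] pref_add[of "limw P" "b n" "length (S n)"] pb[of n] P bs by simp
    then have ms: "map (limw P) [b n..<b n + length (S n)] = S n" by simp
    have "(\<lambda>i. foldl rho m0 (pref (limw P) i)) ` {b n..b (Suc n)} = V"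
      using seg_visits[of rho m0 "limw P" "b n" "length (S n)"] ms pb[of n] f V bs by simp
    then have "tau ` ((\<lambda>i. foldl rho m0 (pref (limw P) i)) ` {b n..b (Suc n)}) = tau ` V"
      by (rule arg_cong)
    moreover have "tau ` ((\<lambda>i. foldl rho m0 (pref (limw P) i)) ` {b n..b (Suc n)}) =
       (\<lambda>i. tau (foldl rho m0 (pref (limw P) i))) ` {b n..b (Suc n)}" by (rule image_image)
    ultimately show ?thesis by metis
  qed
  show ?thesis by (rule block_inf[OF sm]) (use img in blast)
qed

lemma dbw:
  fixes Sig :: "'a set" and Q0 :: "'q set" and alpha :: "('q set \<times> 'q set) set"
    and Q0B :: "'p set" and gB :: "'a list \<Rightarrow> 'p"
  assumes gA: "gfg_strategy Sig Q0 delta (rabin_acc alpha) (strat_of m0 rho tau)"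
    and gB: "gfg_strategy Sig Q0B deltaB (buchi_acc alphaB) gB"
    and finB: "finite alphaB"
    and L: "lang Sig Q0B deltaB (buchi_acc alphaB) = lang Sig Q0 delta (rabin_acc alpha)"
    and u: "u \<in> lists Sig" "foldl rho m0 u = m"
    and x: "x \<in> lists Sig" "x \<noteq> []" "foldl rho m x = m"
    and z: "z \<in> lists Sig" "foldl rho m z = m"
    and acc: "rabin_acc alpha (tau ` visits rho m x)"
    and rej: "\<not> rabin_acc alpha (tau ` (visits rho m x \<union> visits rho m z))"
  shows False
proof -
  define xp where "xp k = concat (replicate k x)" for k
  have xp_Suc: "xp (Suc k) = xp k @ x" for k
    unfolding xp_def by (metis concat.simps(2) concat_append concat.simps(1) append_Nil2 replicate_Suc replicate_append_same)
  have xp_lists: "xp k \<in> lists Sig" for k by (induction k) (use x in \<open>auto simp: xp_Suc xp_def\<close>)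
  have xp_loop: "foldl rho m (xp k) = m" for k by (induction k) (use x in \<open>auto simp: xp_Suc xp_def\<close>)
  have xp_len: "length (xp k) = k * length x" for k by (induction k) (auto simp: xp_Suc xp_def)
  have xp_vis: "visits rho m (xp (Suc k)) = visits rho m x" for k
  proof (induction k)
    case 0 then show ?case by (simp add: xp_def)
  next
    case (Suc k) then show ?case using xp_Suc[of "Suc k"] by (simp add: visits_append xp_loop)
  qed
  have run_lang: "w \<in> lang Sig Q0 delta (rabin_acc alpha)"
    if "w \<in> words Sig" "rabin_acc alpha (inf_states (\<lambda>i. tau (foldl rho m0 (pref w i))))" for w
    using that gA unfolding gfg_strategy_def lang_def strat_of_eq by blast
  have claimA: "\<exists>k>0. \<exists>i>length p. i \<le> length (p @ xp k) \<and> gB (take i (p @ xp k)) \<in> alphaB"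
    if p: "p \<in> lists Sig" "foldl rho m0 p = m" for p
  proof -
    define Pp where "Pp n = p @ xp n" for n
    have PpS: "\<forall>n. Pp (Suc n) = Pp n @ x" unfolding Pp_def by (simp add: xp_Suc)
    have Ppf: "\<forall>n. foldl rho m0 (Pp n) = m" unfolding Pp_def using p xp_loop by simp
    have Pplen: "\<forall>n. length (Pp n) < length (Pp (Suc n))" using PpS x by simp
    have Ppl: "\<forall>n. Pp n \<in> lists Sig" unfolding Pp_def using p xp_lists by simp
    define W where "W = limw Pp"
    have Ww: "W \<in> words Sig" unfolding W_def by (rule limw_words[OF Ppl Pplen])
    have "inf_states (\<lambda>i. tau (foldl rho m0 (pref W i))) = tau ` visits rho m x"
      unfolding W_def by (rule blk[OF PpS _ Ppf]) (use x in auto)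
    then have "W \<in> lang Sig Q0 delta (rabin_acc alpha)" using run_lang[OF Ww] acc by simp
    then have "W \<in> lang Sig Q0B deltaB (buchi_acc alphaB)" using L by simp
    then have "buchi_acc alphaB (inf_states (\<lambda>i. gB (pref W i)))"
      using gB Ww unfolding gfg_strategy_def by blast
    then obtain s where s: "s \<in> alphaB" "\<exists>\<^sub>\<infinity>i. gB (pref W i) = s"
      unfolding buchi_acc_def inf_states_def by blast
    then obtain i where i: "i > length p" "gB (pref W i) = s" by (auto simp: INFM_nat)
    have "1 \<le> length x" using x(2) by (simp add: Suc_le_eq)
    then have "i * 1 \<le> i * length x" by (rule mult_le_mono2)
    then have ile: "i \<le> length (Pp i)" unfolding Pp_def xp_len length_append by linarith
    have "pref W i = take i (pref W (length (Pp i)))" using ile by (rule pref_take)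
    also have "... = take i (Pp i)" unfolding W_def by (simp add: limw_pref[OF _ Pplen] PpS)
    finally have "gB (take i (p @ xp i)) \<in> alphaB" using i s unfolding Pp_def by simp
    moreover have "i > 0" using i by simp
    ultimately show ?thesis using i ile unfolding Pp_def by blast
  qed
  define kf where "kf p = (SOME k. 0 < k \<and> (\<exists>i>length p. i \<le> length (p @ xp k) \<and> gB (take i (p @ xp k)) \<in> alphaB))" for p
  have kf: "0 < kf p \<and> (\<exists>i>length p. i \<le> length (p @ xp (kf p)) \<and> gB (take i (p @ xp (kf p))) \<in> alphaB)"
    if "p \<in> lists Sig" "foldl rho m0 p = m" for p
    unfolding kf_def using claimA[OF that] by (rule someI_ex)
  define Pl where "Pl = rec_nat u (\<lambda>n p. p @ (xp (kf p) @ z))"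
  have Pl0: "Pl 0 = u" and PlS: "\<forall>n. Pl (Suc n) = Pl n @ (xp (kf (Pl n)) @ z)"
    unfolding Pl_def by simp_all
  have inv: "Pl n \<in> lists Sig \<and> foldl rho m0 (Pl n) = m" for n
    by (induction n) (use u z xp_lists xp_loop PlS Pl0 in auto)
  have Plf: "\<forall>n. foldl rho m0 (Pl n) = m" using inv by blast
  have Pll: "\<forall>n. Pl n \<in> lists Sig" using inv by blast
  have ne: "\<forall>n. xp (kf (Pl n)) @ z \<noteq> []"
  proof
    fix n
    have "0 < kf (Pl n)" using kf inv by blast
    then show "xp (kf (Pl n)) @ z \<noteq> []" using xp_len[of "kf (Pl n)"] x(2) by auto
  qed
  have vis: "\<forall>n. visits rho m (xp (kf (Pl n)) @ z) = visits rho m x \<union> visits rho m z"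
  proof
    fix n
    have "0 < kf (Pl n)" using kf inv by blast
    then obtain k where "kf (Pl n) = Suc k" using gr0_implies_Suc by blast
    then show "visits rho m (xp (kf (Pl n)) @ z) = visits rho m x \<union> visits rho m z"
      by (simp add: visits_append xp_loop xp_vis)
  qed
  have Pllen: "\<forall>n. length (Pl n) < length (Pl (Suc n))" using PlS ne by simp
  define Wd where "Wd = limw Pl"
  have Wdw: "Wd \<in> words Sig" unfolding Wd_def by (rule limw_words[OF Pll Pllen])
  have inf: "inf_states (\<lambda>i. tau (foldl rho m0 (pref Wd i))) = tau ` (visits rho m x \<union> visits rho m z)"
    unfolding Wd_def by (rule blk[OF PlS ne Plf vis])
  have "\<exists>\<^sub>\<infinity>i. gB (pref Wd i) \<in> alphaB"
    unfolding INFM_nat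
  proof
    fix n0
    obtain i where i: "i > length (Pl n0)" "i \<le> length (Pl n0 @ xp (kf (Pl n0)))"
      "gB (take i (Pl n0 @ xp (kf (Pl n0)))) \<in> alphaB" using kf inv by blast
    have n0: "n0 \<le> length (Pl n0)" by (rule len_ge[OF Pllen])
    have "i \<le> length (Pl (Suc n0))" using i PlS by simp
    then have "pref Wd i = take i (pref Wd (length (Pl (Suc n0))))" by (rule pref_take)
    also have "... = take i (Pl (Suc n0))" unfolding Wd_def
      using limw_pref[OF _ Pllen, of "Suc n0"] PlS by metis
    also have "... = take i (Pl n0 @ xp (kf (Pl n0)))" using PlS i(2)
      by (metis append.assoc append_take_drop_id take_append diff_is_0_eq take0 append_Nil2)
    finally show "\<exists>i>n0. gB (pref Wd i) \<in> alphaB" using i n0 by (intro exI[of _ i]) auto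
  qed
  then have "\<exists>\<^sub>\<infinity>i. \<exists>s\<in>alphaB. gB (pref Wd i) = s" by (auto elim: INFM_mono)
  then have "\<exists>s\<in>alphaB. \<exists>\<^sub>\<infinity>i. gB (pref Wd i) = s" using INFM_finite_Bex_distrib[OF finB, of "\<lambda>s i. gB (pref Wd i) = s"] by simp
  then have "buchi_acc alphaB (inf_states (\<lambda>i. gB (pref Wd i)))"
    unfolding buchi_acc_def inf_states_def by blast
  moreover have "is_run Q0B deltaB Wd (\<lambda>i. gB (pref Wd i))"
    using gB Wdw unfolding gfg_strategy_def by blast
  ultimately have "Wd \<in> lang Sig Q0B deltaB (buchi_acc alphaB)"
    using Wdw unfolding lang_def by blast
  then have "Wd \<in> lang Sig Q0 delta (rabin_acc alpha)" using L by simp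
  then have "rabin_acc alpha (inf_states (\<lambda>i. tau (foldl rho m0 (pref Wd i))))"
    using gA Wdw unfolding gfg_strategy_def strat_of_eq by blast
  then show False using inf rej by simp
qed

lemma conn:
  assumes finM: "finite M" and ab: "a \<in> M" "b \<in> M" "tau a = tau b"
    and norep: "\<not> replaceable Sig alpha M rho tau b a"
  shows "\<exists>cf K. 0 < K \<and> (\<forall>l. walkv Sig rho a b (cf l)) \<and> (\<forall>l::nat. \<exists>l'<K. cf l = cf l') \<and>
        (tau ` \<Union>(range cf) \<subseteq> {tau a} \<or> \<not> rabin_acc alpha (tau ` \<Union>(range cf)))"
proof (cases "a = b")
  case True
  show ?thesis
    by (rule exI[of _ "\<lambda>l. {a}"], rule exI[of _ 1]) (auto simp: True walkv_refl)
next
  case False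
  then obtain S where S: "S \<in> combinations (mpaths Sig M rho a b)"
    "\<not> rabin_acc (alpha_g alpha M tau) S"
    using norep ab unfolding replaceable_def by auto
  then obtain P' where P': "P' \<subseteq> mpaths Sig M rho a b" "P' \<noteq> {}" "S = \<Union>(set ` P')"
    unfolding combinations_def by blast
  have SM: "S \<subseteq> M" using P' unfolding mpaths_def by auto
  have finS: "finite S" using SM finM by (rule finite_subset)
  have "\<forall>c\<in>S. \<exists>ps\<in>P'. c \<in> set ps" using P' by blast
  then obtain f where f: "\<forall>c\<in>S. f c \<in> P' \<and> c \<in> set (f c)" by metis
  obtain p0 where p0: "p0 \<in> P'" using P' by blast
  define P'' where "P'' = insert p0 (f ` S)"
  have P''1: "P'' \<subseteq> P'" unfolding P''_def using f p0 by auto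
  have P''2: "\<Union>(set ` P'') = S"
  proof
    show "\<Union>(set ` P'') \<subseteq> S" using P''1 P'(3) by blast
    show "S \<subseteq> \<Union>(set ` P'')"
    proof
      fix c assume c: "c \<in> S"
      then have "f c \<in> P''" "c \<in> set (f c)" using f unfolding P''_def by auto
      then show "c \<in> \<Union>(set ` P'')" by blast
    qed
  qed
  have "finite P''" unfolding P''_def using finS by simp
  then obtain xs where xs: "set xs = P''" using finite_list by blast
  have xsne: "xs \<noteq> []" using xs P''_def by auto
  define cf where "cf l = set (xs ! min l (length xs - 1))" for l :: nat
  have mem: "xs ! min l (length xs - 1) \<in> P''" for l
    using xs xsne by (metis diff_less length_greater_0_conv less_one min.strict_coboundedI2 nth_mem)
  have rng: "\<Union>(range cf) = S"
  proof
    show "\<Union>(range cf) \<subseteq> S" using mem P''2 unfolding cf_def by blast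
    show "S \<subseteq> \<Union>(range cf)"
    proof
      fix c assume "c \<in> S"
      then obtain ps where ps: "ps \<in> P''" "c \<in> set ps" using P''2 by blast
      then obtain j where j: "j < length xs" "xs ! j = ps" using xs by (metis in_set_conv_nth)
      then have "min j (length xs - 1) = j" by simp
      then have "cf j = set ps" unfolding cf_def using j by simp
      then show "c \<in> \<Union>(range cf)" using ps by blast
    qed
  qed
  have walks: "walkv Sig rho a b (cf l)" for l
  proof -
    have "xs ! min l (length xs - 1) \<in> mpaths Sig M rho a b" using mem P''1 P' by blast
    then show ?thesis unfolding cf_def mpaths_def by (intro path_walk) auto
  qed
  have per: "\<exists>l'<length xs. cf l = cf l'" for l
  proof -
    have "min l (length xs - 1) < length xs" using xsne by (simp add: min.strict_coboundedI2)
    then show ?thesis unfolding cf_def by (intro exI[of _ "min l (length xs - 1)"]) simp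
  qed
  have "\<not> rabin_acc alpha (tau ` \<Union>(range cf))" using S(2) rabin_g[OF SM, of alpha tau] rng by simp
  then show ?thesis using walks per xsne by (intro exI[of _ cf] exI[of _ "length xs"]) auto
qed

lemma rabin_accI: "(E, F) \<in> alpha \<Longrightarrow> S \<inter> E = {} \<Longrightarrow> S \<inter> F \<noteq> {} \<Longrightarrow> rabin_acc alpha S"
  unfolding rabin_acc_def by blast

lemma lift:
  fixes Sig :: "'a set" and Q Q0 :: "'q set" and M :: "'m set"
  assumes nrw: "nrw_wf Sig Q Q0 delta alpha"
    and trd: "transducer Sig Q M m0 rho tau"
    and used: "\<forall>q\<in>Q. \<forall>a\<in>Sig. \<forall>q'\<in>delta q a. \<exists>u\<in>lists Sig.
          strat_of m0 rho tau u = q \<and> strat_of m0 rho tau (u @ [a]) = q'"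
    and norep: "\<forall>m\<in>M. \<forall>m'\<in>M. \<not> replaceable Sig alpha M rho tau m m'"
    and w: "w \<in> words Sig" and r: "is_run Q0 delta w r"
    and rej: "\<not> rabin_acc alpha (inf_states r)"
    and i: "i \<in> M" "tau i \<in> inf_states r"
  shows "\<exists>T. walkv Sig rho i i T \<and> \<not> rabin_acc alpha (tau ` T)"
proof -
  have finQ: "finite Q" and Q0Q: "Q0 \<subseteq> Q" and dQ: "\<forall>q\<in>Q. \<forall>a\<in>Sig. delta q a \<subseteq> Q"
    using nrw unfolding nrw_wf_def aut_wf_def by auto
  have finM: "finite M" and m0M: "m0 \<in> M" and rhoM: "\<forall>m\<in>M. \<forall>a\<in>Sig. rho m a \<in> M"
    and tauQ: "\<forall>m\<in>M. tau m \<in> Q"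
    using trd unfolding transducer_def by auto
  have wS: "w n \<in> Sig" for n using w unfolding words_def by auto
  have rQ: "r n \<in> Q" for n
  proof (induction n)
    case 0 then show ?case using r Q0Q unfolding is_run_def by auto
  next
    case (Suc n) then show ?case using r dQ wS unfolding is_run_def by blast
  qed
  have rstep: "r (Suc n) \<in> delta (r n) (w n)" for n using r unfolding is_run_def by auto
  have "finite (range r)" using rQ finQ by (metis finite_subset image_subsetI)
  from segment[OF this i(2)] obtain j1 j2 where seg: "j1 < j2" "r j1 = tau i" "r j2 = tau i"
    "r ` {j1..j2} = inf_states r" by blast
  define L where "L = j2 - j1"
  have "\<forall>k. \<exists>u. k < L \<longrightarrow> u \<in> lists Sig \<and> strat_of m0 rho tau u = r (j1 + k) \<and>
      strat_of m0 rho tau (u @ [w (j1 + k)]) = r (Suc (j1 + k))"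
    using used rQ wS rstep by blast
  then obtain U where U: "\<forall>k. k < L \<longrightarrow> U k \<in> lists Sig \<and> strat_of m0 rho tau (U k) = r (j1 + k) \<and>
      strat_of m0 rho tau (U k @ [w (j1 + k)]) = r (Suc (j1 + k))"
    by metis
  define mk where "mk k = foldl rho m0 (U k)" for k
  define nk where "nk k = rho (mk k) (w (j1 + k))" for k
  have mkM: "mk k \<in> M" if "k < L" for k
    unfolding mk_def using foldl_in[OF m0M _ rhoM] U that by blast
  have nkM: "nk k \<in> M" if "k < L" for k
    unfolding nk_def using mkM[OF that] rhoM wS by blast
  have taumk: "tau (mk k) = r (j1 + k)" if "k < L" for k
    using U that unfolding mk_def strat_of_eq by blast
  have taunk: "tau (nk k) = r (Suc (j1 + k))" if "k < L" for k
    using U that unfolding nk_def mk_def strat_of_eq by simp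
  define Pt where "Pt k = (if k = 0 \<or> L < k then i else nk (k - 1))" for k
  define At where "At k = (if k < L then mk k else i)" for k
  have PtM: "Pt k \<in> M" if "k \<le> L" for k
    unfolding Pt_def using i nkM that by auto
  have AtM: "At k \<in> M" if "k \<le> L" for k
    unfolding At_def using i mkM that by auto
  have tauPt: "tau (Pt k) = r (j1 + k)" if "k \<le> L" for k
  proof (cases "k = 0")
    case True then show ?thesis unfolding Pt_def using seg by simp
  next
    case False
    then have "Pt k = nk (k - 1)" "k - 1 < L" using that unfolding Pt_def by auto
    then show ?thesis using taunk[of "k - 1"] False by simp
  qed
  have tauAt: "tau (At k) = r (j1 + k)" if "k \<le> L" for k
  proof (cases "k < L")
    case True then show ?thesis unfolding At_def using taumk by simp
  next
    case False
    then have "k = L" using that by simp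
    then show ?thesis unfolding At_def L_def using seg by simp
  qed
  have "\<forall>k. \<exists>cf K. k \<le> L \<longrightarrow> 0 < K \<and> (\<forall>l. walkv Sig rho (Pt k) (At k) (cf l)) \<and>
        (\<forall>l::nat. \<exists>l'<K. cf l = cf l') \<and>
        (tau ` \<Union>(range cf) \<subseteq> {tau (Pt k)} \<or> \<not> rabin_acc alpha (tau ` \<Union>(range cf)))"
  proof (intro allI)
    fix k
    show "\<exists>cf K. k \<le> L \<longrightarrow> 0 < K \<and> (\<forall>l. walkv Sig rho (Pt k) (At k) (cf l)) \<and>
        (\<forall>l::nat. \<exists>l'<K. cf l = cf l') \<and>
        (tau ` \<Union>(range cf) \<subseteq> {tau (Pt k)} \<or> \<not> rabin_acc alpha (tau ` \<Union>(range cf)))"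
    proof (cases "k \<le> L")
      case True
      have eq: "tau (Pt k) = tau (At k)" using tauPt[OF True] tauAt[OF True] by simp
      have nr: "\<not> replaceable Sig alpha M rho tau (At k) (Pt k)"
        by (rule norep[rule_format, OF AtM[OF True] PtM[OF True]])
      show ?thesis
        by (insert conn[OF finM PtM[OF True] AtM[OF True] eq nr], elim exE, intro exI impI, assumption)
    qed simp
  qed
  then obtain CF KK where CF: "\<forall>k. k \<le> L \<longrightarrow> 0 < KK k \<and> (\<forall>l. walkv Sig rho (Pt k) (At k) (CF k l)) \<and>
        (\<forall>l::nat. \<exists>l'<KK k. CF k l = CF k l') \<and>
        (tau ` \<Union>(range (CF k)) \<subseteq> {tau (Pt k)} \<or> \<not> rabin_acc alpha (tau ` \<Union>(range (CF k))))"
    by metis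
  have CF1: "walkv Sig rho (Pt k) (At k) (CF k l)" if "k \<le> L" for k l
    using CF[rule_format, OF that, THEN conjunct2, THEN conjunct1] by blast
  have CF2: "\<exists>l'<KK k. CF k l = CF k l'" if "k \<le> L" for k l
    using CF[rule_format, OF that, THEN conjunct2, THEN conjunct2, THEN conjunct1] by blast
  have CF3: "tau ` \<Union>(range (CF k)) \<subseteq> {tau (Pt k)} \<or> \<not> rabin_acc alpha (tau ` \<Union>(range (CF k)))"
    if "k \<le> L" for k
    using CF[rule_format, OF that, THEN conjunct2, THEN conjunct2, THEN conjunct2] .
  define Op where "Op l k = CF k l \<union> (if k < L then {mk k, nk k} else {})" for l k
  have stepw: "walkv Sig rho (Pt k) (Pt (Suc k)) (Op l k)" if "k < Suc L" for k l
  proof (cases "k < L")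
    case True
    have "walkv Sig rho (Pt k) (At k) (CF k l)" using CF1 True by simp
    moreover have "walkv Sig rho (At k) (nk k) {At k, nk k}"
      unfolding nk_def At_def using True wS by (simp add: walkv_step)
    ultimately have "walkv Sig rho (Pt k) (nk k) (CF k l \<union> {At k, nk k})" by (rule walkv_trans)
    moreover have "Pt (Suc k) = nk k" unfolding Pt_def using True by simp
    ultimately show ?thesis unfolding Op_def At_def using True by simp
  next
    case False
    then have "k = L" using that by simp
    moreover have "walkv Sig rho (Pt k) (At k) (CF k l)" using CF1 that by simp
    ultimately show ?thesis unfolding Op_def At_def Pt_def by simp
  qed
  have Pt0: "Pt 0 = i" "Pt (Suc L) = i" unfolding Pt_def by auto
  have roundw: "walkv Sig rho i i ({i} \<union> (\<Union>k<Suc L. Op l k))" for l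
    using chain_walk[of "Suc L" Sig rho Pt "Op l"] stepw Pt0 by simp
  define K where "K = Suc (\<Sum>k\<le>L. KK k)"
  define T where "T = {i} \<union> (\<Union>l<K. ({i} \<union> (\<Union>k<Suc L. Op l k)))"
  have Tw: "walkv Sig rho i i T" unfolding T_def
    by (rule rounds_walk) (use roundw in blast)
  have KK: "KK k < K" if "k \<le> L" for k
  proof -
    have "KK k \<le> (\<Sum>k\<le>L. KK k)" using that by (intro member_le_sum) auto
    then show ?thesis unfolding K_def by simp
  qed
  have CFT: "\<Union>(range (CF k)) \<subseteq> T" if kL: "k \<le> L" for k
  proof
    fix t assume "t \<in> \<Union>(range (CF k))"
    then obtain l where l: "t \<in> CF k l" by blast
    obtain l' where l': "l' < KK k" "CF k l = CF k l'" using CF2[OF kL] by blast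
    have "l' < K" using l' KK kL by (meson less_trans)
    moreover have "k < Suc L" using kL by simp
    ultimately have lk: "l' \<in> {..<K}" "k \<in> {..<Suc L}" by auto
    have "t \<in> Op l' k" unfolding Op_def using l l' by simp
    then have "t \<in> (\<Union>k<Suc L. Op l' k)" using lk(2) by (rule UN_I[rotated])
    then have "t \<in> {i} \<union> (\<Union>k<Suc L. Op l' k)" by (rule UnI2)
    then have "t \<in> (\<Union>l<K. ({i} \<union> (\<Union>k<Suc L. Op l k)))" using lk(1) by (rule UN_I[rotated])
    then show "t \<in> T" unfolding T_def by (rule UnI2)
  qed
  have inR: "r n \<in> inf_states r" if "j1 \<le> n" "n \<le> j2" for n
  proof -
    have "r n \<in> r ` {j1..j2}" using that by simp
    then show ?thesis using seg(4) by simp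
  qed
  have iT: "i \<in> T" unfolding T_def by simp
  have RT: "inf_states r \<subseteq> tau ` T"
  proof
    fix q assume "q \<in> inf_states r"
    then have "q \<in> r ` {j1..j2}" using seg(4) by simp
    then obtain t where t: "t \<in> {j1..j2}" "r t = q" by (rule imageE) simp
    show "q \<in> tau ` T"
    proof (cases "t < j2")
      case True
      define k where "k = t - j1"
      have k: "k < L" "t = j1 + k" using t True unfolding k_def L_def by auto
      have "mk k \<in> Op 0 k" unfolding Op_def using k by simp
      moreover have "k \<in> {..<Suc L}" "0 \<in> {..<K}" using k unfolding K_def by auto
      ultimately have "mk k \<in> (\<Union>l<K. ({i} \<union> (\<Union>k<Suc L. Op l k)))" by blast
      then have "mk k \<in> T" unfolding T_def by (rule UnI2)
      moreover have "q = tau (mk k)" using taumk[OF k(1)] k t by simp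
      ultimately show ?thesis by (rule rev_image_eqI)
    next
      case False
      then have "t = j2" using t by simp
      then have "q = tau i" using t seg(3) by simp
      then show ?thesis using iT by (rule rev_image_eqI[rotated])
    qed
  qed
  have "\<not> rabin_acc alpha (tau ` T)"
  proof
    assume "rabin_acc alpha (tau ` T)"
    then obtain E F where EF: "(E, F) \<in> alpha" "tau ` T \<inter> E = {}" "tau ` T \<inter> F \<noteq> {}"
      unfolding rabin_acc_def by blast
    have RE: "inf_states r \<inter> E = {}" using EF(2) RT by blast
    have RF: "inf_states r \<inter> F = {}"
    proof (rule ccontr)
      assume "inf_states r \<inter> F \<noteq> {}"
      then have "rabin_acc alpha (inf_states r)" using rabin_accI[OF EF(1) RE] by blast
      then show False using rej by simp
    qed
    obtain t where t: "t \<in> T" "tau t \<in> F" using EF(3) by blast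
    have notR: "tau t \<notin> inf_states r" using t(2) RF by blast
    have "t = i \<or> (\<exists>l\<in>{..<K}. t \<in> {i} \<union> (\<Union>k<Suc L. Op l k))" using t(1) unfolding T_def by blast
    then have "t = i \<or> (\<exists>l<K. \<exists>k<Suc L. t \<in> Op l k)" by blast
    then show False
    proof
      assume "t = i"
      then have "tau t = r j1" using seg(2) by simp
      then show False using notR inR[of j1] seg(1) by simp
    next
      assume "\<exists>l<K. \<exists>k<Suc L. t \<in> Op l k"
      then obtain l k where lk: "l < K" "k < Suc L" "t \<in> Op l k" by blast
      then have kL: "k \<le> L" by simp
      show False
      proof (cases "t \<in> CF k l")
        case True
        from CF3[OF kL] show False
        proof
          assume "tau ` \<Union>(range (CF k)) \<subseteq> {tau (Pt k)}"
          moreover have "t \<in> \<Union>(range (CF k))" using True by blast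
          then have "tau t \<in> tau ` \<Union>(range (CF k))" by (rule imageI)
          ultimately have "tau t \<in> {tau (Pt k)}" by (rule subsetD)
          then have "tau t = r (j1 + k)" using tauPt[OF kL] by simp
          moreover have "r (j1 + k) \<in> inf_states r" using kL using seg(1) unfolding L_def by (intro inR) auto
          ultimately show False using notR by simp
        next
          assume nr: "\<not> rabin_acc alpha (tau ` \<Union>(range (CF k)))"
          have sub: "tau ` \<Union>(range (CF k)) \<subseteq> tau ` T" using CFT[OF kL] by (rule image_mono)
          have "t \<in> \<Union>(range (CF k))" using True by blast
          then have "tau t \<in> tau ` \<Union>(range (CF k))" by (rule imageI)
          then have "tau ` \<Union>(range (CF k)) \<inter> F \<noteq> {}" using t(2) by blast
          moreover have "tau ` \<Union>(range (CF k)) \<inter> E = {}" using sub EF(2) by blast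
          ultimately have "rabin_acc alpha (tau ` \<Union>(range (CF k)))" by (intro rabin_accI[OF EF(1)])
          then show False using nr by simp
        qed
      next
        case False
        then have kL2: "k < L" and tt: "t = mk k \<or> t = nk k" using lk(3) unfolding Op_def by (auto split: if_splits)
        have "r (j1 + k) \<in> inf_states r" using kL2 using seg(1) unfolding L_def by (intro inR) auto
        moreover have "r (Suc (j1 + k)) \<in> inf_states r" using kL2 using seg(1) unfolding L_def by (intro inR) auto
        ultimately show False using tt taumk[OF kL2] taunk[OF kL2] notR by auto
      qed
    qed
  qed
  then show ?thesis using Tw by blast
qed

theorem theorem13:
  fixes Sig :: "'a set" and Q Q0 :: "'q set" and delta :: "'q \<Rightarrow> 'a \<Rightarrow> 'q set"
    and alpha :: "('q set \<times> 'q set) set"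
    and QB Q0B :: "'p set" and deltaB :: "'p \<Rightarrow> 'a \<Rightarrow> 'p set" and alphaB :: "'p set"
  assumes "nrw_wf Sig Q Q0 delta alpha"
    and "gfg Sig Q0 delta (rabin_acc alpha)"
    and "tight Sig Q Q0 delta alpha"
    and "nbw_wf Sig QB Q0B deltaB alphaB"
    and "gfg Sig Q0B deltaB (buchi_acc alphaB)"
    and "lang Sig Q0B deltaB (buchi_acc alphaB) = lang Sig Q0 delta (rabin_acc alpha)"
  shows "\<exists>alpha' \<subseteq> Q. gfg Sig Q0 delta (buchi_acc alpha') \<and>
           lang Sig Q0 delta (buchi_acc alpha') = lang Sig Q0 delta (rabin_acc alpha)"
proof -
  note nrw = assms(1)
  obtain M :: "nat set" and m0 rho tau where trd: "transducer Sig Q M m0 rho tau"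
    and gA: "gfg_strategy Sig Q0 delta (rabin_acc alpha) (strat_of m0 rho tau)"
    and used: "\<forall>q\<in>Q. \<forall>a\<in>Sig. \<forall>q'\<in>delta q a. \<exists>u\<in>lists Sig.
          strat_of m0 rho tau u = q \<and> strat_of m0 rho tau (u @ [a]) = q'"
    and norep: "\<forall>m\<in>M. \<forall>m'\<in>M. \<not> replaceable Sig alpha M rho tau m m'"
    using assms(3) unfolding tight_def by blast
  obtain gB where gB: "gfg_strategy Sig Q0B deltaB (buchi_acc alphaB) gB"
    using assms(5) unfolding gfg_def by blast
  have finB: "finite alphaB" using assms(4) unfolding nbw_wf_def aut_wf_def
    by (auto intro: finite_subset)
  have finM: "finite M" and m0M: "m0 \<in> M" and rhoM: "\<forall>m\<in>M. \<forall>a\<in>Sig. rho m a \<in> M"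
    and tauQ: "\<forall>m\<in>M. tau m \<in> Q"
    using trd unfolding transducer_def by auto
  define L where "L = lang Sig Q0 delta (rabin_acc alpha)"
  define alpha' where "alpha' = {q \<in> Q. \<forall>w r. w \<in> words Sig \<longrightarrow> is_run Q0 delta w r \<longrightarrow>
      q \<in> inf_states r \<longrightarrow> w \<in> L}"
  define g where "g = strat_of m0 rho tau"
  have key: "inf_states (\<lambda>i. g (pref w i)) \<inter> alpha' \<noteq> {}"
    if w: "w \<in> words Sig" and acc: "rabin_acc alpha (inf_states (\<lambda>i. g (pref w i)))" for w
  proof (rule ccontr)
    assume "\<not> inf_states (\<lambda>i. g (pref w i)) \<inter> alpha' \<noteq> {}"
    then have none: "inf_states (\<lambda>i. g (pref w i)) \<inter> alpha' = {}" by simp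
    define mem where "mem i = foldl rho m0 (pref w i)" for i
    have memM: "mem i \<in> M" for i
      unfolding mem_def by (rule foldl_in[OF m0M pref_lists[OF w] rhoM])
    have finr: "finite (range mem)" using memM finM by (metis finite_subset image_subsetI)
    have grun: "(\<lambda>i. g (pref w i)) = (\<lambda>i. tau (mem i))"
      by (simp add: g_def mem_def strat_of_eq)
    define I where "I = inf_states mem"
    have SI: "inf_states (\<lambda>i. g (pref w i)) = tau ` I"
      unfolding grun I_def by (rule inf_image[OF finr])
    have IM: "I \<subseteq> M"
    proof
      fix v assume "v \<in> I"
      then have "\<exists>\<^sub>\<infinity>i. mem i = v" unfolding I_def inf_states_def by simp
      then obtain i where "mem i = v" using INFM_EX by blast
      then show "v \<in> M" using memM by blast
    qed
    have finI: "finite I" using IM finM by (rule finite_subset)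
    have "tau ` I \<noteq> {}" using acc SI unfolding rabin_acc_def by auto
    then obtain m where mI: "m \<in> I" by blast
    from segment[OF finr, of m] mI obtain j1 j2 where seg: "j1 < j2" "mem j1 = m" "mem j2 = m"
      "mem ` {j1..j2} = I" unfolding I_def by blast
    define d where "d = j2 - j1"
    define x where "x = map w [j1..<j1+d]"
    define u where "u = pref w j1"
    have j2d: "j2 = j1 + d" unfolding d_def using seg by simp
    have ul: "u \<in> lists Sig" unfolding u_def by (rule pref_lists[OF w])
    have uf: "foldl rho m0 u = m" using seg(2) unfolding u_def mem_def by simp
    have xl: "x \<in> lists Sig" using w unfolding x_def words_def by auto
    have xne: "x \<noteq> []" unfolding x_def d_def using seg(1) by simp
    have xf: "foldl rho m x = m"
    proof -
      have "mem j2 = foldl rho (foldl rho m0 u) x"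
        unfolding mem_def j2d u_def x_def by (simp add: pref_add)
      then show ?thesis using seg(3) uf by simp
    qed
    have xv: "visits rho m x = I"
      using seg_visits[of rho m0 w j1 d] seg(2,4) j2d unfolding x_def mem_def by simp
    have loops: "\<forall>i'\<in>I. \<exists>T. walkv Sig rho m m (I \<union> T) \<and> \<not> rabin_acc alpha (tau ` T) \<and> i' \<in> T"
    proof
      fix i' assume i': "i' \<in> I"
      have i'M: "i' \<in> M" using i' IM by blast
      have "tau i' \<in> inf_states (\<lambda>i. g (pref w i))" using SI i' by simp
      then have "tau i' \<notin> alpha'" using none by blast
      moreover have "tau i' \<in> Q" using tauQ i'M by blast
      ultimately obtain w' r' where w': "w' \<in> words Sig" and r': "is_run Q0 delta w' r'"
        and ti: "tau i' \<in> inf_states r'" and nL: "w' \<notin> L"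
        unfolding alpha'_def by blast
      have nr: "\<not> rabin_acc alpha (inf_states r')"
        using w' r' nL unfolding L_def lang_def by blast
      obtain T where T: "walkv Sig rho i' i' T" "\<not> rabin_acc alpha (tau ` T)"
        using lift[OF nrw trd used norep w' r' nr i'M ti] by blast
      have i'T: "i' \<in> T" using T(1) by (rule walkv_start)
      obtain zT where zT: "zT \<in> lists Sig" "foldl rho i' zT = i'" "visits rho i' zT = T"
        using T(1) unfolding walkv_def by blast
      have "i' \<in> visits rho m x" using xv i' by simp
      then obtain j where j: "j \<le> length x" "i' = foldl rho m (take j x)"
        unfolding visits_def by auto
      define zz where "zz = take j x @ zT @ drop j x"
      have zzl: "zz \<in> lists Sig" unfolding zz_def using xl zT(1)
        by (auto simp: in_lists_conv_set dest: in_set_takeD in_set_dropD)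
      have fd: "foldl rho i' (drop j x) = m"
        using xf j(2) by (metis append_take_drop_id foldl_append)
      have zzf: "foldl rho m zz = m" unfolding zz_def using j(2) zT(2) fd by simp
      have "visits rho m x = visits rho m (take j x) \<union> visits rho i' (drop j x)"
        using visits_append[of rho m "take j x" "drop j x"] j(2) by simp
      then have zzv: "visits rho m zz = I \<union> T"
        unfolding zz_def using visits_append[of rho m "take j x" "zT @ drop j x"]
          visits_append[of rho i' zT "drop j x"] j(2) zT xv by auto
      have "walkv Sig rho m m (I \<union> T)" unfolding walkv_def using zzl zzf zzv by blast
      then show "\<exists>T. walkv Sig rho m m (I \<union> T) \<and> \<not> rabin_acc alpha (tau ` T) \<and> i' \<in> T"
        using T(2) i'T by blast
    qed
    then obtain Tf where Tf: "\<forall>i'\<in>I. walkv Sig rho m m (I \<union> Tf i') \<and> \<not> rabin_acc alpha (tau ` Tf i') \<and> i' \<in> Tf i'"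
      by metis
    have walkx: "walkv Sig rho m m I" unfolding walkv_def using xl xf xv by blast
    have allw: "walkv Sig rho m m (I \<union> \<Union>(Tf ` J))" if "finite J" "J \<subseteq> I" for J
      using that
    proof (induction J rule: finite_induct)
      case empty then show ?case using walkx by simp
    next
      case (insert a F)
      have h1: "walkv Sig rho m m (I \<union> \<Union>(Tf ` F))" using insert by simp
      have h2: "walkv Sig rho m m (I \<union> Tf a)" using Tf insert by simp
      have "walkv Sig rho m m ((I \<union> \<Union>(Tf ` F)) \<union> (I \<union> Tf a))"
        by (rule walkv_trans[OF h1 h2])
      then show ?case by (simp add: Un_ac)
    qed
    obtain z where z: "z \<in> lists Sig" "foldl rho m z = m" "visits rho m z = I \<union> \<Union>(Tf ` I)"
      using allw[OF finI subset_refl] unfolding walkv_def by blast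
    have IT: "I \<subseteq> \<Union>(Tf ` I)" using Tf by blast
    have "visits rho m x \<union> visits rho m z = \<Union>(Tf ` I)" using xv z(3) IT by blast
    then have "tau ` (visits rho m x \<union> visits rho m z) = (\<Union>i'\<in>I. tau ` Tf i')" by (simp add: image_UN)
    moreover have "\<not> rabin_acc alpha (\<Union>i'\<in>I. tau ` Tf i')" using Tf by (intro rabin_union) blast
    ultimately have rej: "\<not> rabin_acc alpha (tau ` (visits rho m x \<union> visits rho m z))" by simp
    have accx: "rabin_acc alpha (tau ` visits rho m x)" using acc SI xv by simp
    show False using dbw[OF gA gB finB assms(6) ul uf xl xne xf z(1,2) accx rej] .
  qed
  have grunA: "is_run Q0 delta w (\<lambda>i. g (pref w i))" if "w \<in> words Sig" for w
    using gA that unfolding gfg_strategy_def g_def by blast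
  have gaccA: "rabin_acc alpha (inf_states (\<lambda>i. g (pref w i)))" if "w \<in> words Sig" "w \<in> L" for w
    using gA that unfolding gfg_strategy_def g_def L_def by blast
  have langeq: "lang Sig Q0 delta (buchi_acc alpha') = L"
  proof
    show "lang Sig Q0 delta (buchi_acc alpha') \<subseteq> L"
    proof
      fix w assume "w \<in> lang Sig Q0 delta (buchi_acc alpha')"
      then obtain r where r: "w \<in> words Sig" "is_run Q0 delta w r" "inf_states r \<inter> alpha' \<noteq> {}"
        unfolding lang_def buchi_acc_def by blast
      then obtain q where "q \<in> inf_states r" "q \<in> alpha'" by blast
      then show "w \<in> L" using r unfolding alpha'_def by blast
    qed
    show "L \<subseteq> lang Sig Q0 delta (buchi_acc alpha')"
    proof
      fix w assume wL: "w \<in> L"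
      then have ww: "w \<in> words Sig" unfolding L_def lang_def by blast
      have "buchi_acc alpha' (inf_states (\<lambda>i. g (pref w i)))"
        unfolding buchi_acc_def using key[OF ww gaccA[OF ww wL]] .
      then show "w \<in> lang Sig Q0 delta (buchi_acc alpha')"
        unfolding lang_def using ww grunA[OF ww] by blast
    qed
  qed
  have "gfg_strategy Sig Q0 delta (buchi_acc alpha') g"
    unfolding gfg_strategy_def
  proof (intro ballI conjI impI)
    fix w assume ww: "w \<in> words Sig"
    show "is_run Q0 delta w (\<lambda>i. g (pref w i))" by (rule grunA[OF ww])
    assume "w \<in> lang Sig Q0 delta (buchi_acc alpha')"
    then have "w \<in> L" using langeq by simp
    then show "buchi_acc alpha' (inf_states (\<lambda>i. g (pref w i)))"
      unfolding buchi_acc_def using key[OF ww gaccA[OF ww]] by blast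
  qed
  then have "gfg Sig Q0 delta (buchi_acc alpha')" unfolding gfg_def by blast
  moreover have "alpha' \<subseteq> Q" unfolding alpha'_def by blast
  ultimately show ?thesis using langeq unfolding L_def by blast
qed

end
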